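(* As $N\to\infty$, $$\frac{1}{N}\sum_{n\le N} R_4(n)\sim \frac{1}{6}\log^3 N .$$
   Context: For a positive integer $n$, $R_4(n)$ denotes the number of ordered quadruples $(x,y,z,w)$ of positive integers with $n = xyzw + x + y + z + w$. *)

theory Defs
  imports Complex_Main "HOL-Library.Landau_Symbols"
begin

definition R4 :: "nat \<Rightarrow> nat" where
  "R4 n = card {(x :: nat, y :: nat, z :: nat, w :: nat).
      0 < x \<and> 0 < y \<and> 0 < z \<and> 0 < w \<and> n = x * y * z * w + x + y + z + w}"

end

theory Submission imports Defs "HOL-Real_Asymp.Real_Asymp" begin

lemma pow_diff_bounds:
  fixes A B :: real
  assumes "0 \<le> B" "B \<le> A"
  shows "real (Suc j) * B^j * (A - B) \<le> A^Suc j - B^Suc j \<and> A^Suc j - B^Suc j \<le> real (Suc j) * A^j * (A - B)"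
proof (induction j)
  case 0 then show ?case by simp
next
  case (Suc j)
  have e: "A^Suc (Suc j) - B^Suc (Suc j) = A * (A^Suc j - B^Suc j) + B^Suc j * (A - B)"
    by (simp add: algebra_simps)
  have A0: "0 \<le> A" using assms by linarith
  have d: "0 \<le> A - B" using assms by simp
  have Bj: "B^j \<le> A^j" using assms power_mono by blast
  have BS: "B^Suc j \<le> A^Suc j" using assms power_mono by blast
  have u1: "A * (A^Suc j - B^Suc j) \<le> A * (real (Suc j) * A^j * (A - B))"
    using Suc A0 by (intro mult_left_mono) auto
  have u2: "B^Suc j * (A - B) \<le> A^Suc j * (A - B)" using BS d by (rule mult_right_mono)
  have l1: "A * (real (Suc j) * B^j * (A - B)) \<le> A * (A^Suc j - B^Suc j)"
    using Suc A0 by (intro mult_left_mono) auto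
  have l0: "B * (real (Suc j) * B^j * (A - B)) \<le> A * (real (Suc j) * B^j * (A - B))"
    using assms d by (intro mult_right_mono) (auto intro!: mult_nonneg_nonneg)
  show ?case
  proof
    show "real (Suc (Suc j)) * B ^ Suc j * (A - B) \<le> A ^ Suc (Suc j) - B ^ Suc (Suc j)"
      using e l1 l0 by (simp add: algebra_simps)
    show "A ^ Suc (Suc j) - B ^ Suc (Suc j) \<le> real (Suc (Suc j)) * A ^ Suc j * (A - B)"
      using e u1 u2 by (simp add: algebra_simps)
  qed
qed

lemma ln_step:
  assumes "(1::real) \<le> n"
  shows "1/(n+1) \<le> ln ((n+1)/n) \<and> ln ((n+1)/n) \<le> 1/n"
proof
  have "ln ((n+1)/n) \<le> (n+1)/n - 1" using assms by (intro ln_le_minus_one) auto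
  also have "\<dots> = 1/n" using assms by (simp add: field_simps)
  finally show "ln ((n+1)/n) \<le> 1/n" .
  have "ln (n/(n+1)) \<le> n/(n+1) - 1" using assms by (intro ln_le_minus_one) auto
  also have "\<dots> = - (1/(n+1))" using assms by (simp add: field_simps)
  finally have "ln (n/(n+1)) \<le> - (1/(n+1))" .
  moreover have "ln (n/(n+1)) = - ln ((n+1)/n)" using assms by (simp add: ln_div)
  ultimately show "1/(n+1) \<le> ln ((n+1)/n)" by simp
qed


definition P :: "nat \<Rightarrow> real \<Rightarrow> real" where
  "P j t = (\<Sum>n\<in>{1..nat \<lfloor>t\<rfloor>}. (1 / real n) * ln (t / real n) ^ j)"

lemma step_ineq:
  fixes t :: real and k :: nat
  assumes k: "1 \<le> k" and kt: "real k + 1 \<le> t"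
  defines "A \<equiv> ln (t / real k)" and "B \<equiv> ln (t / (real k + 1))"
  shows "(1/(real k + 1)) * B^j \<le> (A^Suc j - B^Suc j) / real (Suc j)
       \<and> (A^Suc j - B^Suc j) / real (Suc j) \<le> (1 / real k) * A^j"
proof -
  have kpos: "0 < real k" using k by simp
  have tpos: "0 < t" using kt kpos by linarith
  have AB: "A - B = ln ((real k + 1) / real k)"
    unfolding A_def B_def using kpos tpos by (simp add: ln_div)
  have B0: "0 \<le> B" unfolding B_def using kt kpos by simp
  have ls: "1/(real k+1) \<le> A - B" "A - B \<le> 1/real k" using AB ln_step[of "real k"] k by auto
  have "0 < 1/(real k+1)" by simp
  hence BA: "B \<le> A" using ls by linarith
  note pb = pow_diff_bounds[OF B0 BA, of j]
  have Bj0: "0 \<le> B^j" using B0 by simp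
  have Aj0: "0 \<le> A^j" using B0 BA by simp
  have "(1/(real k + 1)) * B^j \<le> (A - B) * B^j" using ls Bj0 by (intro mult_right_mono) auto
  also have "\<dots> \<le> (A^Suc j - B^Suc j) / real (Suc j)"
    using pb by (simp add: field_simps del: of_nat_Suc)
  finally have 1: "(1/(real k + 1)) * B^j \<le> (A^Suc j - B^Suc j) / real (Suc j)" .
  have "(A^Suc j - B^Suc j) / real (Suc j) \<le> (A - B) * A^j"
    using pb by (simp add: field_simps del: of_nat_Suc)
  also have "\<dots> \<le> (1/real k) * A^j" using ls Aj0 by (intro mult_right_mono) auto
  finally show ?thesis using 1 by simp
qed

lemma P_bounds:
  assumes t: "1 \<le> t"
  shows "ln t ^ Suc j / real (Suc j) \<le> P j t \<and> P j t \<le> ln t ^ Suc j / real (Suc j) + ln t ^ j"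
proof -
  define m where "m = nat \<lfloor>t\<rfloor>"
  have m1: "1 \<le> m" using t unfolding m_def by linarith
  have mt: "real m \<le> t" "t < real m + 1" using t unfolding m_def by linarith+
  define a where "a = (\<lambda>n::nat. (1 / real n) * ln (t / real n) ^ j)"
  define g where "g = (\<lambda>n::nat. ln (t / real n) ^ Suc j / real (Suc j))"
  have g0: "g n \<ge> 0" if "1 \<le> n" "n \<le> m" for n
    unfolding g_def using that mt by (intro divide_nonneg_nonneg zero_le_power) auto
  have up: "Suc k \<le> m \<longrightarrow> (\<Sum>n\<in>{1..Suc k}. a n) \<le> g 1 + ln t ^ j - g (Suc k)" for k
  proof (induction k)
    case 0 show ?case by (simp add: a_def g_def)
  next
    case (Suc k)
    show ?case
    proof
      assume h: "Suc (Suc k) \<le> m"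
      have "real (Suc k) + 1 \<le> t" using h mt by simp
      from step_ineq[OF _ this, of j]
      have "a (Suc (Suc k)) \<le> g (Suc k) - g (Suc (Suc k))"
        unfolding a_def g_def by (simp add: add.commute diff_divide_distrib)
      moreover have "(\<Sum>n\<in>{1..Suc (Suc k)}. a n) = (\<Sum>n\<in>{1..Suc k}. a n) + a (Suc (Suc k))"
        by simp
      ultimately show "(\<Sum>n\<in>{1..Suc (Suc k)}. a n) \<le> g 1 + ln t ^ j - g (Suc (Suc k))"
        using Suc h by simp
    qed
  qed
  have lo: "Suc k \<le> m \<longrightarrow> g 1 - g (Suc k) \<le> (\<Sum>n\<in>{1..k}. a n)" for k
  proof (induction k)
    case 0 show ?case by simp
  next
    case (Suc k)
    show ?case
    proof
      assume h: "Suc (Suc k) \<le> m"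
      have "real (Suc k) + 1 \<le> t" using h mt by simp
      from step_ineq[OF _ this, of j]
      have "g (Suc k) - g (Suc (Suc k)) \<le> a (Suc k)"
        unfolding a_def g_def by (simp add: add.commute diff_divide_distrib)
      moreover have "(\<Sum>n\<in>{1..Suc k}. a n) = (\<Sum>n\<in>{1..k}. a n) + a (Suc k)"
        by simp
      ultimately show "g 1 - g (Suc (Suc k)) \<le> (\<Sum>n\<in>{1..Suc k}. a n)"
        using Suc h by simp
    qed
  qed
  have Pm: "P j t = (\<Sum>n\<in>{1..m}. a n)" unfolding P_def a_def m_def ..
  obtain k where k: "m = Suc k" using m1 by (cases m) auto
  have upper: "P j t \<le> g 1 + ln t ^ j"
    using up[of k] g0[of m] m1 k Pm by simp
  have last: "g m \<le> a m"
  proof -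
    define A where "A = ln (t / real m)"
    have A0: "0 \<le> A" unfolding A_def using mt m1 by simp
    have "A \<le> ln ((real m + 1) / real m)" unfolding A_def using mt m1
      by (intro ln_mono) (auto simp: divide_strict_right_mono intro: divide_right_mono)
    also have "\<dots> \<le> 1 / real m" using ln_step[of "real m"] m1 by simp
    finally have A1: "A \<le> 1 / real m" .
    have "g m = A^j * A / real (Suc j)" unfolding g_def A_def by (simp add: mult.commute)
    also have "\<dots> \<le> A^j * A / 1" using A0 by (intro divide_left_mono) auto
    also have "\<dots> = A^j * A" by simp
    also have "\<dots> \<le> A^j * (1/real m)" using A0 A1 by (intro mult_left_mono) auto
    finally show ?thesis unfolding a_def A_def by (simp add: mult.commute)
  qed
  have "P j t = (\<Sum>n\<in>{1..k}. a n) + a m" using Pm k by simp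
  hence lower: "g 1 \<le> P j t" using lo[of k] k last by simp
  show ?thesis using upper lower by (simp add: g_def)
qed


definition Hh :: "real \<Rightarrow> real" where
  "Hh t = (\<Sum>n\<in>{1..nat \<lfloor>t\<rfloor>}. 1 / real n)"
definition Gg :: "real \<Rightarrow> real" where
  "Gg t = (\<Sum>n\<in>{1..nat \<lfloor>t\<rfloor>}. Hh (t / real n) / real n)"
definition Ff :: "real \<Rightarrow> real" where
  "Ff t = (\<Sum>n\<in>{1..nat \<lfloor>t\<rfloor>}. Gg (t / real n) / real n)"

lemma Hh_nonneg: "0 \<le> Hh t" unfolding Hh_def by (intro sum_nonneg) auto
lemma Gg_nonneg: "0 \<le> Gg t" unfolding Gg_def by (intro sum_nonneg divide_nonneg_nonneg Hh_nonneg) auto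

lemma idx_ge1: assumes "n \<in> {1..nat \<lfloor>t\<rfloor>}" shows "1 \<le> t / real n"
proof -
  have "int n \<le> \<lfloor>t\<rfloor>" using assms by auto
  hence "real_of_int (int n) \<le> real_of_int \<lfloor>t\<rfloor>" by linarith
  hence "real n \<le> t" using of_int_floor_le[of t] by linarith
  moreover have "0 < real n" using assms by auto
  ultimately show ?thesis by simp
qed

lemma Hh_bounds: assumes "1 \<le> t" shows "ln t \<le> Hh t \<and> Hh t \<le> ln t + 1"
proof -
  have "Hh t = P 0 t" unfolding Hh_def P_def by simp
  thus ?thesis using P_bounds[OF assms, of 0] by simp
qed

lemma Gg_bounds: assumes t: "1 \<le> t"
  shows "ln t ^ 2 / 2 \<le> Gg t \<and> Gg t \<le> ln t ^ 2 / 2 + 2 * ln t + 1"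
proof -
  have "Gg t \<ge> P 1 t" unfolding Gg_def P_def
  proof (intro sum_mono)
    fix n assume n: "n \<in> {1..nat \<lfloor>t\<rfloor>}"
    have "ln (t / real n) \<le> Hh (t / real n)" using Hh_bounds[OF idx_ge1[OF n]] by simp
    thus "1 / real n * ln (t / real n) ^ 1 \<le> Hh (t / real n) / real n" using n
      by (simp add: divide_right_mono)
  qed
  moreover have "Gg t \<le> P 1 t + P 0 t" unfolding Gg_def P_def sum.distrib[symmetric]
  proof (intro sum_mono)
    fix n assume n: "n \<in> {1..nat \<lfloor>t\<rfloor>}"
    have "Hh (t / real n) \<le> ln (t / real n) + 1" using Hh_bounds[OF idx_ge1[OF n]] by simp
    hence "Hh (t / real n) / real n \<le> (ln (t / real n) + 1) / real n" by (rule divide_right_mono) simp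
    thus "Hh (t / real n) / real n \<le> 1 / real n * ln (t / real n) ^ 1 + 1 / real n * ln (t / real n) ^ 0" using n
      by (simp add: divide_right_mono add_divide_distrib)
  qed
  ultimately show ?thesis using P_bounds[OF t, of 1] P_bounds[OF t, of 0]
    by (simp add: power2_eq_square)
qed

lemma Ff_bounds: assumes t: "1 \<le> t"
  shows "ln t ^ 3 / 6 \<le> Ff t \<and> Ff t \<le> ln t ^ 3 / 6 + 3/2 * ln t ^ 2 + 3 * ln t + 1"
proof -
  have "Ff t \<ge> P 2 t / 2" unfolding Ff_def P_def sum_divide_distrib
  proof (intro sum_mono)
    fix n assume n: "n \<in> {1..nat \<lfloor>t\<rfloor>}"
    have "ln (t / real n)^2/2 \<le> Gg (t / real n)" using Gg_bounds[OF idx_ge1[OF n]] by simp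
    hence "(ln (t / real n)^2/2) / real n \<le> Gg (t / real n) / real n" by (rule divide_right_mono) simp
    thus "1 / real n * ln (t / real n) ^ 2 / 2 \<le> Gg (t / real n) / real n" using n
      by (simp add: divide_right_mono)
  qed
  moreover have "Ff t \<le> P 2 t / 2 + 2 * P 1 t + P 0 t"
    unfolding Ff_def P_def sum_divide_distrib sum_distrib_left sum.distrib[symmetric]
  proof (intro sum_mono)
    fix n assume n: "n \<in> {1..nat \<lfloor>t\<rfloor>}"
    have "Gg (t / real n) \<le> ln (t / real n)^2/2 + 2 * ln (t / real n) + 1"
      using Gg_bounds[OF idx_ge1[OF n]] by simp
    hence "Gg (t / real n) / real n \<le> (ln (t / real n)^2/2 + 2 * ln (t / real n) + 1) / real n" by (rule divide_right_mono) simp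
    thus "Gg (t / real n) / real n \<le> 1 / real n * ln (t / real n) ^ 2 / 2 + 2 * (1 / real n * ln (t / real n) ^ 1) + 1 / real n * ln (t / real n) ^ 0"
      using n by (simp add: divide_right_mono add_divide_distrib)
  qed
  ultimately show ?thesis using P_bounds[OF t, of 2] P_bounds[OF t, of 1] P_bounds[OF t, of 0]
    by (simp add: power2_eq_square power3_eq_cube)
qed


definition Q2 :: "nat \<Rightarrow> (nat \<times> nat) set" where
  "Q2 m = {(z,w). 0<z \<and> 0<w \<and> z*w \<le> m}"
definition Q3 :: "nat \<Rightarrow> (nat \<times> nat \<times> nat) set" where
  "Q3 m = {(y,z,w). 0<y \<and> 0<z \<and> 0<w \<and> y*z*w \<le> m}"
definition Q4 :: "nat \<Rightarrow> (nat \<times> nat \<times> nat \<times> nat) set" where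
  "Q4 m = {(x,y,z,w). 0<x \<and> 0<y \<and> 0<z \<and> 0<w \<and> x*y*z*w \<le> m}"

lemma le_div_iff': "0 < y \<Longrightarrow> (a \<le> m div y) = (y * a \<le> (m::nat))"
  by (simp add: less_eq_div_iff_mult_less_eq mult.commute)

lemma key_iff:
  fixes y r m :: nat
  shows "(0 < y \<and> 0 < r \<and> y * r \<le> m) = (y \<in> {1..m} \<and> 0 < r \<and> r \<le> m div y)"
proof
  assume h: "0 < y \<and> 0 < r \<and> y * r \<le> m"
  have "y \<le> y * r" using h by simp
  hence "y \<le> m" using h by linarith
  thus "y \<in> {1..m} \<and> 0 < r \<and> r \<le> m div y" using h by (auto simp: le_div_iff')
next
  assume h: "y \<in> {1..m} \<and> 0 < r \<and> r \<le> m div y"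
  thus "0 < y \<and> 0 < r \<and> y * r \<le> m" by (auto simp: le_div_iff')
qed

lemma Q2_eq: "Q2 m = Sigma {1..m} (\<lambda>z. {1..m div z})"
proof (rule set_eqI)
  fix p :: "nat \<times> nat" obtain z w where p: "p = (z,w)" by (cases p)
  show "p \<in> Q2 m \<longleftrightarrow> p \<in> Sigma {1..m} (\<lambda>z. {1..m div z})"
    unfolding p Q2_def using key_iff[of z w m] by auto
qed

lemma Q3_eq: "Q3 m = Sigma {1..m} (\<lambda>y. Q2 (m div y))"
proof (rule set_eqI)
  fix p :: "nat \<times> nat \<times> nat" obtain y z w where p: "p = (y,z,w)" by (cases p)
  have e: "y * z * w = y * (z * w)" by (simp add: mult.assoc)
  show "p \<in> Q3 m \<longleftrightarrow> p \<in> Sigma {1..m} (\<lambda>y. Q2 (m div y))"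
    unfolding p Q2_def Q3_def e using key_iff[of y "z*w" m] by auto
qed

lemma Q4_eq: "Q4 m = Sigma {1..m} (\<lambda>x. Q3 (m div x))"
proof (rule set_eqI)
  fix p :: "nat \<times> nat \<times> nat \<times> nat" obtain x y z w where p: "p = (x,y,z,w)" by (cases p)
  have e: "x * y * z * w = x * (y * z * w)" by (simp add: mult.assoc)
  show "p \<in> Q4 m \<longleftrightarrow> p \<in> Sigma {1..m} (\<lambda>x. Q3 (m div x))"
    unfolding p Q3_def Q4_def e using key_iff[of x "y*z*w" m] by auto
qed

lemma card_Q2: "card (Q2 m) = (\<Sum>z\<in>{1..m}. m div z)"
  unfolding Q2_eq by simp
lemma fin_Q2: "finite (Q2 m)" unfolding Q2_eq by auto
lemma card_Q3: "card (Q3 m) = (\<Sum>y\<in>{1..m}. card (Q2 (m div y)))"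
  unfolding Q3_eq using fin_Q2 by simp
lemma fin_Q3: "finite (Q3 m)" unfolding Q3_eq using fin_Q2 by auto
lemma card_Q4: "card (Q4 m) = (\<Sum>x\<in>{1..m}. card (Q3 (m div x)))"
  unfolding Q4_eq using fin_Q3 by simp
lemma fin_Q4: "finite (Q4 m)" unfolding Q4_eq using fin_Q3 by auto

lemma div_real_bounds: "real (m div n) \<le> real m / real n \<and> real m / real n - 1 \<le> real (m div n)"
proof -
  have e: "real (m div n) = real_of_int \<lfloor>real m / real n\<rfloor>"
    by (metis floor_divide_of_nat_eq of_int_of_nat_eq)
  show ?thesis unfolding e by linarith
qed

lemma Hh_div: "Hh (real (a div b)) = Hh (real a / real b)"
  unfolding Hh_def by (metis floor_divide_of_nat_eq floor_of_nat)

lemma Gg_div: "Gg (real (a div b)) = Gg (real a / real b)"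
proof -
  have "Hh (real (a div b) / real n) = Hh (real a / real b / real n)" for n
  proof -
    have "Hh (real (a div b) / real n) = Hh (real (a div b div n))" by (simp add: Hh_div)
    also have "\<dots> = Hh (real (a div (b * n)))" by (simp add: div_mult2_eq)
    also have "\<dots> = Hh (real a / real (b*n))" by (simp add: Hh_div)
    finally show ?thesis by simp
  qed
  moreover have "nat \<lfloor>real (a div b)\<rfloor> = nat \<lfloor>real a / real b\<rfloor>"
    by (metis floor_divide_of_nat_eq floor_of_nat)
  ultimately show ?thesis unfolding Gg_def by simp
qed

lemma Hh_nat: "Hh (real m) = (\<Sum>n\<in>{1..m}. 1 / real n)" unfolding Hh_def by simp
lemma Gg_nat: "Gg (real m) = (\<Sum>n\<in>{1..m}. Hh (real m / real n) / real n)" unfolding Gg_def by simp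
lemma Ff_nat: "Ff (real m) = (\<Sum>n\<in>{1..m}. Gg (real m / real n) / real n)" unfolding Ff_def by simp

lemma C2_bounds: "real m * Hh (real m) - real m \<le> real (card (Q2 m)) \<and> real (card (Q2 m)) \<le> real m * Hh (real m)"
proof -
  have r: "real (card (Q2 m)) = (\<Sum>z\<in>{1..m}. real (m div z))" unfolding card_Q2 by simp
  have "(\<Sum>z\<in>{1..m}. real (m div z)) \<le> (\<Sum>z\<in>{1..m}. real m * (1 / real z))"
    using div_real_bounds by (intro sum_mono) simp
  moreover have "(\<Sum>z\<in>{1..m}. real m * (1 / real z) - 1) \<le> (\<Sum>z\<in>{1..m}. real (m div z))"
    using div_real_bounds by (intro sum_mono) simp
  ultimately show ?thesis unfolding r Hh_nat sum_distrib_left[symmetric] sum_subtractf by simp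
qed


lemma ratio_facts:
  assumes y: "y \<in> {1..m}"
  shows "1 \<le> real m / real y \<and> ln (real m / real y) \<le> ln (real m) \<and> 0 \<le> ln (real m / real y)
    \<and> 1 \<le> m div y"
proof -
  have y1: "1 \<le> real y" "real y \<le> real m" using y by auto
  have r1: "1 \<le> real m / real y" using y1 by simp
  have "real m / real y \<le> real m" using y1 by (simp add: divide_le_eq)
  hence "ln (real m / real y) \<le> ln (real m)" using r1 by simp
  moreover have "1 \<le> m div y" using y by (auto simp: le_div_iff')
  ultimately show ?thesis using r1 by simp
qed

lemma C3_upper: "real (card (Q3 m)) \<le> real m * Gg (real m)"
proof -
  have "real (card (Q3 m)) = (\<Sum>y\<in>{1..m}. real (card (Q2 (m div y))))" unfolding card_Q3 by simp
  also have "\<dots> \<le> (\<Sum>y\<in>{1..m}. real m * (Hh (real m / real y) / real y))"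
  proof (intro sum_mono)
    fix y assume y: "y \<in> {1..m}"
    define q where "q = real (m div y)"
    define h where "h = Hh (real m / real y)"
    have "real (card (Q2 (m div y))) \<le> q * h"
      using C2_bounds[of "m div y"] unfolding q_def h_def Hh_div by simp
    also have "\<dots> \<le> (real m / real y) * h"
      unfolding q_def h_def using div_real_bounds Hh_nonneg by (intro mult_right_mono) auto
    finally show "real (card (Q2 (m div y))) \<le> real m * (Hh (real m / real y) / real y)"
      unfolding h_def by simp
  qed
  also have "\<dots> = real m * Gg (real m)" unfolding Gg_nat sum_distrib_left ..
  finally show ?thesis .
qed

lemma C3_lower: assumes m: "1 \<le> m"
  shows "real m * Gg (real m) - 2 * real m * (1 + ln (real m)) \<le> real (card (Q3 m))"
proof -
  have "(\<Sum>y\<in>{1..m}. real m * (Hh (real m / real y) / real y) - (1 + ln (real m)) - real m * (1 / real y))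
      \<le> (\<Sum>y\<in>{1..m}. real (card (Q2 (m div y))))"
  proof (intro sum_mono)
    fix y assume y: "y \<in> {1..m}"
    note rf = ratio_facts[OF y]
    define q where "q = real (m div y)"
    define r where "r = real m / real y"
    define h where "h = Hh r"
    have h0: "0 \<le> h" unfolding h_def by (rule Hh_nonneg)
    have h1: "h \<le> 1 + ln (real m)" unfolding h_def r_def using Hh_bounds[of "real m / real y"] rf by simp
    have qr: "r - 1 \<le> q" "q \<le> r" unfolding q_def r_def using div_real_bounds by auto
    have c: "q * h - q \<le> real (card (Q2 (m div y)))"
      using C2_bounds[of "m div y"] unfolding q_def h_def r_def Hh_div by simp
    have "(r - 1) * h \<le> q * h" using qr h0 by (intro mult_right_mono) auto
    moreover have "r * h = real m * (h / real y)" "r = real m * (1 / real y)" unfolding r_def by simp_all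
    moreover have "(r - 1) * h = r * h - h" by (simp add: algebra_simps)
    ultimately have "r * h - (1 + ln (real m)) - r \<le> real (card (Q2 (m div y)))"
      using c h1 qr by linarith
    thus "real m * (Hh (real m / real y) / real y) - (1 + ln (real m)) - real m * (1 / real y)
      \<le> real (card (Q2 (m div y)))" unfolding h_def r_def by simp
  qed
  also have "\<dots> = real (card (Q3 m))" unfolding card_Q3 by simp
  finally have "real m * Gg (real m) - real m * (1 + ln (real m)) - real m * Hh (real m) \<le> real (card (Q3 m))"
    unfolding sum_subtractf Gg_nat Hh_nat sum_distrib_left by simp
  moreover have "Hh (real m) \<le> 1 + ln (real m)" using Hh_bounds[of "real m"] m by simp
  hence "real m * Hh (real m) \<le> real m * (1 + ln (real m))" by (intro mult_left_mono) auto
  ultimately show ?thesis by (simp add: algebra_simps)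
qed

lemma C4_upper: "real (card (Q4 m)) \<le> real m * Ff (real m)"
proof -
  have "real (card (Q4 m)) = (\<Sum>y\<in>{1..m}. real (card (Q3 (m div y))))" unfolding card_Q4 by simp
  also have "\<dots> \<le> (\<Sum>y\<in>{1..m}. real m * (Gg (real m / real y) / real y))"
  proof (intro sum_mono)
    fix y assume y: "y \<in> {1..m}"
    define q where "q = real (m div y)"
    define h where "h = Gg (real m / real y)"
    have "real (card (Q3 (m div y))) \<le> q * h"
      using C3_upper[of "m div y"] unfolding q_def h_def Gg_div by simp
    also have "\<dots> \<le> (real m / real y) * h"
      unfolding q_def h_def using div_real_bounds Gg_nonneg by (intro mult_right_mono) auto
    finally show "real (card (Q3 (m div y))) \<le> real m * (Gg (real m / real y) / real y)"
      unfolding h_def by simp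
  qed
  also have "\<dots> = real m * Ff (real m)" unfolding Ff_nat sum_distrib_left ..
  finally show ?thesis .
qed

lemma C4_lower: assumes m: "1 \<le> m"
  defines "L \<equiv> ln (real m)"
  shows "real m * Ff (real m) - real m * (L^2/2 + 2*L + 1) - 2 * real m * (1 + L)^2 \<le> real (card (Q4 m))"
proof -
  have "(\<Sum>y\<in>{1..m}. real m * (Gg (real m / real y) / real y) - (L^2/2 + 2*L + 1) - 2 * (1 + L) * (real m * (1 / real y)))
      \<le> (\<Sum>y\<in>{1..m}. real (card (Q3 (m div y))))"
  proof (intro sum_mono)
    fix y assume y: "y \<in> {1..m}"
    note rf = ratio_facts[OF y]
    define q where "q = real (m div y)"
    define r where "r = real m / real y"
    define g where "g = Gg r"
    have g0: "0 \<le> g" unfolding g_def by (rule Gg_nonneg)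
    have lr: "0 \<le> ln r" "ln r \<le> L" using rf unfolding r_def L_def by auto
    have "ln r ^ 2 \<le> L^2" using lr by (intro power_mono) auto
    hence g1: "g \<le> L^2/2 + 2*L + 1" unfolding g_def using Gg_bounds[of r] rf lr unfolding r_def by linarith
    have qr: "r - 1 \<le> q" "q \<le> r" unfolding q_def r_def using div_real_bounds by auto
    have q1: "1 \<le> m div y" using rf by simp
    have lq: "ln q \<le> L" unfolding q_def L_def using q1 by (intro ln_mono) (auto simp: div_le_dividend)
    have c: "q * g - 2 * q * (1 + ln q) \<le> real (card (Q3 (m div y)))"
      using C3_lower[OF q1] unfolding q_def g_def r_def Gg_div by simp
    have "(r - 1) * g \<le> q * g" using qr g0 by (intro mult_right_mono) auto
    moreover have "2 * q * (1 + ln q) \<le> 2 * r * (1 + L)"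
      using qr lq q1 unfolding q_def by (intro mult_mono) auto
    moreover have "r * g = real m * (g / real y)" "r = real m * (1 / real y)" unfolding r_def by simp_all
    moreover have "(r - 1) * g = r * g - g" by (simp add: algebra_simps)
    moreover have "2 * r * (1 + L) = 2 * (1 + L) * r" by simp
    ultimately have "r * g - (L^2/2 + 2*L + 1) - 2 * (1 + L) * r \<le> real (card (Q3 (m div y)))"
      using c g1 qr by linarith
    thus "real m * (Gg (real m / real y) / real y) - (L^2/2 + 2*L + 1) - 2 * (1 + L) * (real m * (1 / real y))
      \<le> real (card (Q3 (m div y)))" unfolding g_def r_def by simp
  qed
  also have "\<dots> = real (card (Q4 m))" unfolding card_Q4 by simp
  finally have "real m * Ff (real m) - real m * (L^2/2 + 2*L + 1) - 2 * (1 + L) * (real m * Hh (real m)) \<le> real (card (Q4 m))"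
    unfolding sum_subtractf Ff_nat Hh_nat sum_distrib_left by simp
  moreover have "Hh (real m) \<le> 1 + L" using Hh_bounds[of "real m"] m unfolding L_def by simp
  moreover have "0 \<le> L" unfolding L_def using m by simp
  ultimately have "2 * (1 + L) * (real m * Hh (real m)) \<le> 2 * (1 + L) * (real m * (1 + L))"
    by (intro mult_left_mono) auto
  moreover have "2 * (1 + L) * (real m * (1 + L)) = 2 * real m * (1 + L)^2" by (simp add: power2_eq_square)
  ultimately show ?thesis using \<open>real m * Ff (real m) - real m * (L^2/2 + 2*L + 1) - 2 * (1 + L) * (real m * Hh (real m)) \<le> real (card (Q4 m))\<close> by linarith
qed


definition Sset :: "nat \<Rightarrow> (nat \<times> nat \<times> nat \<times> nat) set" where
  "Sset N = {(x,y,z,w). 0<x \<and> 0<y \<and> 0<z \<and> 0<w \<and> x*y*z*w + x + y + z + w \<le> N}"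

lemma poly_ineq: "x*y*z*w + x + y + z + w + 1 \<le> (x+1)*(y+1)*(z+1)*(w+1::nat)"
  by (simp add: algebra_simps)

lemma Sset_sub: "Sset N \<subseteq> Q4 N"
proof
  fix p assume "p \<in> Sset N"
  then obtain x y z w where p: "p = (x,y,z,w)" "0<x" "0<y" "0<z" "0<w" "x*y*z*w + x + y + z + w \<le> N"
    unfolding Sset_def by auto
  thus "p \<in> Q4 N" unfolding Q4_def by auto
qed

lemma fin_Sset: "finite (Sset N)" using finite_subset[OF Sset_sub fin_Q4] .

lemma sum_R4: "(\<Sum>n=1..N. real (R4 n)) = real (card (Sset N))"
proof -
  define A where "A n = {(x :: nat, y :: nat, z :: nat, w :: nat).
      0 < x \<and> 0 < y \<and> 0 < z \<and> 0 < w \<and> n = x * y * z * w + x + y + z + w}" for n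
  have AS: "A n \<subseteq> Sset N" if "n \<in> {1..N}" for n using that unfolding A_def Sset_def by auto
  have finA: "\<forall>n\<in>{1..N}. finite (A n)" using AS fin_Sset finite_subset by blast
  have disj: "\<forall>i\<in>{1..N}. \<forall>j\<in>{1..N}. i \<noteq> j \<longrightarrow> A i \<inter> A j = {}" unfolding A_def by auto
  have U: "(\<Union>n\<in>{1..N}. A n) = Sset N"
  proof
    show "(\<Union>n\<in>{1..N}. A n) \<subseteq> Sset N" using AS by blast
    show "Sset N \<subseteq> (\<Union>n\<in>{1..N}. A n)"
    proof
      fix p assume "p \<in> Sset N"
      then obtain x y z w where p: "p = (x,y,z,w)" "0<x" "0<y" "0<z" "0<w" "x*y*z*w + x + y + z + w \<le> N"
        unfolding Sset_def by auto
      hence "x*y*z*w + x + y + z + w \<in> {1..N}" by auto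
      moreover have "p \<in> A (x*y*z*w + x + y + z + w)" unfolding A_def using p by auto
      ultimately show "p \<in> (\<Union>n\<in>{1..N}. A n)" by blast
    qed
  qed
  have "card (Sset N) = (\<Sum>n\<in>{1..N}. card (A n))"
    using card_UN_disjoint[OF _ finA disj] U by simp
  moreover have "R4 n = card (A n)" for n unfolding R4_def A_def ..
  ultimately show ?thesis by simp
qed

lemma Q4_cover: "real (card (Q4 (N+1))) \<le> real (card (Sset N)) + 4 * real (card (Q3 (N+1)))"
proof -
  define M where "M = N + 1"
  define sh where "sh = (\<lambda>(x::nat,y::nat,z::nat,w::nat). (x+1,y+1,z+1,w+1))"
  define Z1 where "Z1 = (\<lambda>(y::nat,z::nat,w::nat). (1::nat,y,z,w)) ` Q3 M"
  define Z2 where "Z2 = (\<lambda>(x::nat,z::nat,w::nat). (x,1::nat,z,w)) ` Q3 M"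
  define Z3 where "Z3 = (\<lambda>(x::nat,y::nat,w::nat). (x,y,1::nat,w)) ` Q3 M"
  define Z4 where "Z4 = (\<lambda>(x::nat,y::nat,z::nat). (x,y,z,1::nat)) ` Q3 M"
  have sub: "Q4 M \<subseteq> sh ` Sset N \<union> Z1 \<union> Z2 \<union> Z3 \<union> Z4"
  proof
    fix p assume "p \<in> Q4 M"
    then obtain a b c d where p: "p = (a,b,c,d)" "0<a" "0<b" "0<c" "0<d" "a*b*c*d \<le> M"
      unfolding Q4_def by auto
    show "p \<in> sh ` Sset N \<union> Z1 \<union> Z2 \<union> Z3 \<union> Z4"
    proof (cases "a = 1 \<or> b = 1 \<or> c = 1 \<or> d = 1")
      case True
      then show ?thesis
      proof (elim disjE)
        assume "a = 1" hence "p \<in> Z1" unfolding Z1_def Q3_def using p by (auto intro!: image_eqI[of _ _ "(b,c,d)"])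
        thus ?thesis by blast
      next
        assume "b = 1" hence "p \<in> Z2" unfolding Z2_def Q3_def using p by (auto intro!: image_eqI[of _ _ "(a,c,d)"])
        thus ?thesis by blast
      next
        assume "c = 1" hence "p \<in> Z3" unfolding Z3_def Q3_def using p by (auto intro!: image_eqI[of _ _ "(a,b,d)"])
        thus ?thesis by blast
      next
        assume "d = 1" hence "p \<in> Z4" unfolding Z4_def Q3_def using p by (auto intro!: image_eqI[of _ _ "(a,b,c)"])
        thus ?thesis by blast
      qed
    next
      case False
      define x where "x = a - 1"
      define y where "y = b - 1"
      define z where "z = c - 1"
      define w where "w = d - 1"
      have xs: "a = x + 1" "b = y + 1" "c = z + 1" "d = w + 1" "0<x" "0<y" "0<z" "0<w"
        using False p unfolding x_def y_def z_def w_def by auto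
      have "x*y*z*w + x + y + z + w + 1 \<le> M" 
      proof -
        have "a*b*c*d = (x+1)*(y+1)*(z+1)*(w+1)" using xs by simp
        thus ?thesis using poly_ineq[of x y z w] p(6) by linarith
      qed
      hence "(x,y,z,w) \<in> Sset N" unfolding Sset_def M_def using xs by auto
      moreover have "p = sh (x,y,z,w)" unfolding sh_def using p xs by simp
      ultimately show ?thesis by blast
    qed
  qed
  have "card (Q4 M) \<le> card (sh ` Sset N \<union> Z1 \<union> Z2 \<union> Z3 \<union> Z4)"
    using sub fin_Sset fin_Q3 unfolding Z1_def Z2_def Z3_def Z4_def by (intro card_mono) auto
  also have "\<dots> \<le> card (sh ` Sset N) + card Z1 + card Z2 + card Z3 + card Z4"
  proof -
    have "card (sh ` Sset N \<union> Z1 \<union> Z2 \<union> Z3 \<union> Z4) \<le> card (sh ` Sset N \<union> Z1 \<union> Z2 \<union> Z3) + card Z4"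
      by (rule card_Un_le)
    moreover have "card (sh ` Sset N \<union> Z1 \<union> Z2 \<union> Z3) \<le> card (sh ` Sset N \<union> Z1 \<union> Z2) + card Z3"
      by (rule card_Un_le)
    moreover have "card (sh ` Sset N \<union> Z1 \<union> Z2) \<le> card (sh ` Sset N \<union> Z1) + card Z2"
      by (rule card_Un_le)
    moreover have "card (sh ` Sset N \<union> Z1) \<le> card (sh ` Sset N) + card Z1"
      by (rule card_Un_le)
    ultimately show ?thesis by linarith
  qed
  also have "\<dots> \<le> card (Sset N) + card (Q3 M) + card (Q3 M) + card (Q3 M) + card (Q3 M)"
    unfolding Z1_def Z2_def Z3_def Z4_def by (intro add_mono card_image_le fin_Sset fin_Q3)
  finally show ?thesis unfolding M_def by simp
qed


theorem theorem4:
  shows "(\<lambda>N::nat. (\<Sum>n=1..N. real (R4 n)) / real N) \<sim>[at_top] (\<lambda>N. (1/6) * (ln (real N)) ^ 3)"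
proof (rule asymp_equivI')
  define lo where "lo = (\<lambda>N::nat. (real N + 1) * (ln (real N+1)^3/6 - 5*(ln (real N+1)^2/2 + 2*ln(real N+1)+1) - 2*(1+ln (real N+1))^2) / real N / ((1/6) * ln (real N)^3))"
  define hi where "hi = (\<lambda>N::nat. (ln (real N)^3/6 + 3/2*ln (real N)^2 + 3*ln (real N) + 1) / ((1/6) * ln (real N)^3))"
  have lo_lim: "(lo \<longlongrightarrow> 1) at_top" unfolding lo_def by real_asymp
  have hi_lim: "(hi \<longlongrightarrow> 1) at_top" unfolding hi_def by real_asymp
  have bounds: "lo N \<le> (\<Sum>n=1..N. real (R4 n)) / real N / ((1/6) * (ln (real N)) ^ 3)
       \<and> (\<Sum>n=1..N. real (R4 n)) / real N / ((1/6) * (ln (real N)) ^ 3) \<le> hi N" if N: "N \<ge> 2" for N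
  proof -
    define S where "S = (\<Sum>n=1..N. real (R4 n))"
    have S: "S = real (card (Sset N))" unfolding S_def by (rule sum_R4)
    define L where "L = ln (real N)"
    have L0: "0 < L" unfolding L_def using N by simp
    have g0: "0 < (1/6) * L^3" using L0 by simp
    have N0: "0 < real N" using N by simp
    have N1: "1 \<le> real N" using N by simp
    have "S \<le> real (card (Q4 N))" unfolding S using card_mono[OF fin_Q4 Sset_sub] by simp
    also have "\<dots> \<le> real N * Ff (real N)" by (rule C4_upper)
    also have "\<dots> \<le> real N * (L^3/6 + 3/2*L^2 + 3*L + 1)"
      using Ff_bounds[OF N1] N0 unfolding L_def by (intro mult_left_mono) auto
    finally have up: "S / real N \<le> L^3/6 + 3/2*L^2 + 3*L + 1"
      using N0 by (simp add: divide_le_eq mult.commute)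
    have hiN: "S / real N / ((1/6) * L^3) \<le> hi N"
      unfolding hi_def L_def[symmetric] by (rule divide_right_mono[OF up]) (use g0 in simp)
    define M where "M = N + 1"
    define L' where "L' = ln (real M)"
    have M1: "1 \<le> M" unfolding M_def by simp
    have rM: "real M = real N + 1" unfolding M_def by simp
    have L'0: "0 \<le> L'" unfolding L'_def using M1 by simp
    have c4: "real M * Ff (real M) - real M * (L'^2/2 + 2*L' + 1) - 2 * real M * (1 + L')^2 \<le> real (card (Q4 M))"
      using C4_lower[OF M1] unfolding L'_def .
    have c3: "real (card (Q3 M)) \<le> real M * (L'^2/2 + 2*L' + 1)"
    proof -
      have "real (card (Q3 M)) \<le> real M * Gg (real M)" by (rule C3_upper)
      also have "\<dots> \<le> real M * (L'^2/2 + 2*L' + 1)"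
        using Gg_bounds[of "real M"] M1 unfolding L'_def by (intro mult_left_mono) auto
      finally show ?thesis .
    qed
    have ff: "real M * (L'^3/6) \<le> real M * Ff (real M)"
      using Ff_bounds[of "real M"] M1 unfolding L'_def by (intro mult_left_mono) auto
    have cov: "real (card (Q4 M)) \<le> S + 4 * real (card (Q3 M))" unfolding S M_def by (rule Q4_cover)
    have "real M * (L'^3/6 - 5*(L'^2/2 + 2*L' + 1) - 2*(1+L')^2) \<le> S"
      using c4 c3 ff cov by (simp add: algebra_simps)
    hence "real M * (L'^3/6 - 5*(L'^2/2 + 2*L' + 1) - 2*(1+L')^2) / real N \<le> S / real N"
      using N0 by (intro divide_right_mono) auto
    hence loN: "lo N \<le> S / real N / ((1/6) * L^3)"
      unfolding lo_def L_def[symmetric] unfolding L'_def rM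
      by (rule divide_right_mono) (use g0 in simp)
    show ?thesis using loN hiN unfolding S_def L_def by simp
  qed
  show "((\<lambda>N. (\<Sum>n=1..N. real (R4 n)) / real N / ((1/6) * (ln (real N)) ^ 3)) \<longlongrightarrow> 1) at_top"
  proof (rule tendsto_sandwich[OF _ _ lo_lim hi_lim])
    show "\<forall>\<^sub>F N in at_top. lo N \<le> (\<Sum>n=1..N. real (R4 n)) / real N / ((1/6) * (ln (real N)) ^ 3)"
      using bounds by (intro eventually_at_top_linorderI[of 2]) blast
    show "\<forall>\<^sub>F N in at_top. (\<Sum>n=1..N. real (R4 n)) / real N / ((1/6) * (ln (real N)) ^ 3) \<le> hi N"
      using bounds by (intro eventually_at_top_linorderI[of 2]) blast
  qed
qed

end
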